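(* Let $0.5<p\le 1$, $q=1-p$ and $1-1/p\le\rho\le 0$, and set $s=\sqrt{-\rho pq}$. For a group of two contributors $u_a,u_b$, let $R_a\in\{1,-1\}$ be uniformly random and $R_b=-R_a$. Let $C_a,C_b$ be independent of each other and of $R_a$, each with distribution $\Pr[C=1.5]=p-s$, $\Pr[C=0.5]=s$, $\Pr[C=-0.5]=s$, $\Pr[C=-1.5]=q-s$. For $j\in\{a,b\}$ let $T_j=1$ if $C_j+R_j>0$ and $T_j=0$ if $C_j+R_j<0$. Then the joint distribution of $(T_a,T_b)$ is $\Pr[T_a=1,T_b=1]=p^2+\rho pq$, $\Pr[T_a=1,T_b=0]=\Pr[T_a=0,T_b=1]=(1-\rho)pq$, $\Pr[T_a=0,T_b=0]=q^2+\rho pq$.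
   Context: This describes the non-colluding-server instantiation of Joint Randomized Response: the server generates $R_a,R_b$ for each group, and each contributor generates $C_j$ locally; $T_j$ indicates whether contributor $u_j$ reports truthfully. *)

theory Defs
  imports "HOL-Probability.Probability_Mass_Function"
begin

definition jrr_T :: "real \<times> real \<times> real \<Rightarrow> bool \<times> bool" where
  "jrr_T = (\<lambda>(ra, ca, cb). (ca + ra > 0, cb + (- ra) > 0))"

end

theory Submission
  imports Defs
begin

theorem theorem5:
  fixes p \<rho> :: real and C :: "real pmf"
  defines "q \<equiv> 1 - p"
  defines "s \<equiv> sqrt (- \<rho> * p * q)"
  assumes "1/2 < p" and "p \<le> 1" and "1 - 1/p \<le> \<rho>" and "\<rho> \<le> 0"
  assumes "pmf C (3/2) = p - s" and "pmf C (1/2) = s"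
      and "pmf C (-1/2) = s" and "pmf C (-3/2) = q - s"
  defines "D \<equiv> map_pmf jrr_T (pair_pmf (pmf_of_set {1, -1 :: real}) (pair_pmf C C))"
  shows "pmf D (True, True) = p\<^sup>2 + \<rho> * p * q \<and>
         pmf D (True, False) = (1 - \<rho>) * p * q \<and>
         pmf D (False, True) = (1 - \<rho>) * p * q \<and>
         pmf D (False, False) = q\<^sup>2 + \<rho> * p * q"
proof -
  define S where "S = {3/2, 1/2, -1/2, -3/2 :: real}"
  have fS: "finite S" by (simp add: S_def)
  have "measure_pmf.prob C S = 1"
    using assms(7-10) unfolding measure_measure_pmf_finite[OF fS] by (simp add: S_def q_def)
  hence "AE x in measure_pmf C. x \<in> S"
    by (subst (asm) measure_pmf.prob_eq_1) auto
  hence CS: "set_pmf C \<subseteq> S" by (auto simp: AE_measure_pmf_iff)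
  have s2: "s\<^sup>2 = - \<rho> * p * q"
    unfolding s_def q_def using assms(3,4,6)
    by (intro real_sqrt_pow2) (simp add: mult_nonneg_nonpos2 mult_nonpos_nonneg)
  define R where "R = {1, -1 :: real}"
  define A where "A = R \<times> S \<times> S"
  let ?M = "pair_pmf (pmf_of_set R) (pair_pmf C C)"
  have key: "pmf D x = (\<Sum>a\<in>A. indicator (jrr_T -` {x}) a * pmf ?M a)" for x
  proof -
    have "pmf D x = measure_pmf.prob ?M (jrr_T -` {x})"
      unfolding D_def R_def by (simp add: pmf_map)
    also have "\<dots> = measure_pmf.expectation ?M (indicator (jrr_T -` {x}))"
      by simp
    also have "\<dots> = (\<Sum>a\<in>A. indicator (jrr_T -` {x}) a * pmf ?M a)"
      by (rule integral_measure_pmf_real)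
         (use CS in \<open>auto simp: A_def R_def fS set_pmf_of_set\<close>)
    finally show ?thesis .
  qed
  have pR: "pmf (pmf_of_set R) r = (if r \<in> R then 1/2 else 0)" for r
    by (simp add: R_def)
  have tr: "sum f (R \<times> S \<times> S) = (\<Sum>r\<in>R. \<Sum>a\<in>S. \<Sum>b\<in>S. f (r,a,b))" for f :: "_ \<Rightarrow> real"
    by (simp add: sum.cartesian_product)
  have m1: "pmf C (-(1/2)) = s" "pmf C (-(3/2)) = q - s"
    using assms(9,10) by simp_all
  show ?thesis
    unfolding key A_def tr
    apply (simp add: S_def R_def pmf_pair pR jrr_T_def assms(7-8) m1 indicator_def)
    using s2 unfolding q_def
    apply (simp add: algebra_simps power2_eq_square)
    done
qed

end
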